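(* Let $f:\mathbb R^n\to\mathbb R$ be differentiable with $L$-Lipschitz gradient, i.e. $\|\nabla f(x)-\nabla f(y)\|_2\le L\|x-y\|_2$ for all $x,y\in\mathbb R^n$. Let $\{x_t\}_{t\ge0}$ and $\{L_t\}_{t\ge 0}$ be generated by the AC-FW algorithm described in the context, with a damping sequence satisfying $r_t\le 1$ for all $t$. Then $L_t\le L$ for every $t\ge 0$.
   Context: Let $\mathcal A\subset\mathbb R^n$ be a compact set (the dictionary) and let the feasible set be $\mathcal X=\mathrm{conv}(\mathcal A)$ (convex hull) or $\mathcal X=\mathrm{lin}(\mathcal A)$ (linear span). For $x\neq y$ let $\ell(x,y):=2|f(y)-f(x)-\nabla f(x)^\top(y-x)|/\|y-x\|_2^2$, and $\ell(x,x):=0$. AC-FW algorithm: given a damping sequence $\{r_t\}_{t\ge0}$ of positive numbers and a direction-finding subroutine, pick $x_{-1}\in\mathcal A$, $x_0\in\arg\min_{v\in\mathcal A}\nabla f(x_{-1})^\top v$, and set $L_0:=\ell(x_{-1},x_0)$. For $t=0,1,2,\dots$: choose $v_t\in\arg\min_{v\in\mathcal A}\nabla f(x_t)^\top v$; the subroutine returns a direction $d_t\in\mathbb R^n$ and a maximal stepsize $\gamma_t^{\max}\in(0,\infty]$; set $\gamma_t:=\min\{\nabla f(x_t)^\top d_t/(L_t\|d_t\|_2^2),\,\gamma_t^{\max}\}$, $\bar x_{t+1}:=x_t-\gamma_t d_t$, $L_{t+1}:=\max\{\ell(x_t,\bar x_{t+1}),\,r_tL_t\}$, and $x_{t+1}:=\bar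 x_{t+1}$ if $f(\bar x_{t+1})<f(x_t)$, otherwise $x_{t+1}:=x_t$. *)

theory Defs
  imports "HOL-Analysis.Analysis"
begin

definition ell :: "(real^'n \<Rightarrow> real) \<Rightarrow> (real^'n \<Rightarrow> real^'n) \<Rightarrow> real^'n \<Rightarrow> real^'n \<Rightarrow> real" where
  "ell f g x y = (if x = y then 0
     else 2 * \<bar>f y - f x - g x \<bullet> (y - x)\<bar> / (norm (y - x))^2)"

text \<open>Stepsize gamma_t = min { g(x_t).d_t / (L_t |d_t|^2), gamma_max_t },
  gamma_max_t in (0, infinity] represented as an extended real.\<close>
definition acfw_step :: "real \<Rightarrow> ereal \<Rightarrow> real" where
  "acfw_step ratio gmax = real_of_ereal (min (ereal ratio) gmax)"

text \<open>The sequences are generated by AC-FW on the dictionary A with damping r,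
  starting point xm1 (= x_{-1}), iterates x, trial points xb (xb (Suc t) = bar x_{t+1}),
  FW vertices v, subroutine directions d and maximal stepsizes gmax, estimates Lc.
  The direction-finding subroutine is arbitrary.\<close>
definition acfw_run ::
  "(real^'n \<Rightarrow> real) \<Rightarrow> (real^'n \<Rightarrow> real^'n) \<Rightarrow> (real^'n) set \<Rightarrow> (nat \<Rightarrow> real)
   \<Rightarrow> real^'n \<Rightarrow> (nat \<Rightarrow> real^'n) \<Rightarrow> (nat \<Rightarrow> real^'n) \<Rightarrow> (nat \<Rightarrow> real^'n)
   \<Rightarrow> (nat \<Rightarrow> real^'n) \<Rightarrow> (nat \<Rightarrow> ereal) \<Rightarrow> (nat \<Rightarrow> real) \<Rightarrow> bool" where
  "acfw_run f g A r xm1 x xb v d gmax Lc \<longleftrightarrow>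
     xm1 \<in> A \<and> x 0 \<in> A \<and> (\<forall>u\<in>A. g xm1 \<bullet> x 0 \<le> g xm1 \<bullet> u) \<and>
     Lc 0 = ell f g xm1 (x 0) \<and>
     (\<forall>t. v t \<in> A \<and> (\<forall>u\<in>A. g (x t) \<bullet> v t \<le> g (x t) \<bullet> u) \<and>
          gmax t > 0 \<and>
          xb (Suc t) = x t - acfw_step (g (x t) \<bullet> d t / (Lc t * (norm (d t))^2)) (gmax t) *\<^sub>R d t \<and>
          Lc (Suc t) = max (ell f g (x t) (xb (Suc t))) (r t * Lc t) \<and>
          x (Suc t) = (if f (xb (Suc t)) < f (x t) then xb (Suc t) else x t))"

end

theory Submission
  imports Defs
begin

lemma line_deriv:
  fixes f :: "real^'n \<Rightarrow> real" and g :: "real^'n \<Rightarrow> real^'n"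
  assumes grad: "\<And>y. (f has_derivative (\<lambda>h. g y \<bullet> h)) (at y)"
  shows "((\<lambda>s. f (x + s *\<^sub>R h)) has_real_derivative (g (x + s *\<^sub>R h) \<bullet> h)) (at s)"
proof -
  have d1: "((\<lambda>s. x + s *\<^sub>R h) has_derivative (\<lambda>s. s *\<^sub>R h)) (at s)"
    by (auto intro!: derivative_eq_intros)
  have "((\<lambda>s. f (x + s *\<^sub>R h)) has_derivative (\<lambda>t. g (x + s *\<^sub>R h) \<bullet> (t *\<^sub>R h))) (at s)"
    using has_derivative_compose[OF d1 grad] by (simp add: o_def)
  moreover have "(\<lambda>t. g (x + s *\<^sub>R h) \<bullet> (t *\<^sub>R h)) = (*) (g (x + s *\<^sub>R h) \<bullet> h)"
    by (auto simp: mult.commute)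
  ultimately show ?thesis
    by (simp add: has_field_derivative_def)
qed

lemma descent:
  fixes f :: "real^'n \<Rightarrow> real" and g :: "real^'n \<Rightarrow> real^'n"
  assumes grad: "\<And>y. (f has_derivative (\<lambda>h. g y \<bullet> h)) (at y)"
    and lip: "\<And>y z. norm (g y - g z) \<le> L * norm (y - z)"
  shows "\<bar>f (x + h) - f x - g x \<bullet> h\<bar> \<le> L / 2 * (norm h)^2"
proof -
  have bnd: "\<bar>g (x + s *\<^sub>R h) \<bullet> h - g x \<bullet> h\<bar> \<le> L * s * (norm h)^2" if "s \<ge> 0" for s
  proof -
    have "\<bar>g (x + s *\<^sub>R h) \<bullet> h - g x \<bullet> h\<bar> = \<bar>(g (x + s *\<^sub>R h) - g x) \<bullet> h\<bar>"
      by (simp add: inner_diff_left)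
    also have "\<dots> \<le> norm (g (x + s *\<^sub>R h) - g x) * norm h" by (rule Cauchy_Schwarz_ineq2)
    also have "\<dots> \<le> (L * norm (s *\<^sub>R h)) * norm h"
      using lip[of "x + s *\<^sub>R h" x] by (intro mult_right_mono) auto
    also have "\<dots> = L * s * (norm h)^2" using that by (simp add: power2_eq_square)
    finally show ?thesis .
  qed
  define c where "c = g x \<bullet> h"
  define N where "N = (norm h)^2"
  define p1 where "p1 = (\<lambda>s. f (x + s *\<^sub>R h) - s * c - L / 2 * s^2 * N)"
  define p2 where "p2 = (\<lambda>s. f (x + s *\<^sub>R h) - s * c + L / 2 * s^2 * N)"
  have D1: "(p1 has_real_derivative (g (x + s *\<^sub>R h) \<bullet> h - c - L * s * N)) (at s)" for s
    unfolding p1_def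
    by (rule derivative_eq_intros line_deriv[OF grad] refl | simp)+
  have D2: "(p2 has_real_derivative (g (x + s *\<^sub>R h) \<bullet> h - c + L * s * N)) (at s)" for s
    unfolding p2_def
    by (rule derivative_eq_intros line_deriv[OF grad] refl | simp)+
  obtain z1 where z1: "0 < z1" "z1 < 1" "p1 1 - p1 0 = (1 - 0) * (g (x + z1 *\<^sub>R h) \<bullet> h - c - L * z1 * N)"
    using MVT2[of 0 1 p1 "\<lambda>s. g (x + s *\<^sub>R h) \<bullet> h - c - L * s * N"] D1 by auto
  obtain z2 where z2: "0 < z2" "z2 < 1" "p2 1 - p2 0 = (1 - 0) * (g (x + z2 *\<^sub>R h) \<bullet> h - c + L * z2 * N)"
    using MVT2[of 0 1 p2 "\<lambda>s. g (x + s *\<^sub>R h) \<bullet> h - c + L * s * N"] D2 by auto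
  have "p1 1 - p1 0 \<le> 0" using z1 bnd[of z1] unfolding c_def N_def by simp
  moreover have "p2 1 - p2 0 \<ge> 0" using z2 bnd[of z2] unfolding c_def N_def by simp
  ultimately show ?thesis unfolding p1_def p2_def c_def N_def abs_le_iff by (simp add: field_simps)
qed

lemma L_nonneg:
  fixes g :: "real^'n \<Rightarrow> real^'n"
  assumes lip: "\<And>y z. norm (g y - g z) \<le> L * norm (y - z)"
  shows "L \<ge> 0"
proof -
  obtain i :: 'n where True by auto
  have n: "norm (axis i (1::real) - 0) > 0" by (simp add: axis_eq_0_iff)
  have "0 \<le> L * norm (axis i (1::real) - 0)" using lip[of "axis i 1" 0] norm_ge_zero order_trans by blast
  with n show ?thesis by (simp add: zero_le_mult_iff)
qed

lemma ell_le:
  fixes f :: "real^'n \<Rightarrow> real" and g :: "real^'n \<Rightarrow> real^'n"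
  assumes grad: "\<And>y. (f has_derivative (\<lambda>h. g y \<bullet> h)) (at y)"
    and lip: "\<And>y z. norm (g y - g z) \<le> L * norm (y - z)"
  shows "ell f g a b \<le> L \<and> 0 \<le> ell f g a b"
proof (cases "a = b")
  case True then show ?thesis using L_nonneg[OF lip] by (simp add: ell_def)
next
  case False
  have pos: "(norm (b - a))^2 > 0" using False by simp
  have "\<bar>f (a + (b - a)) - f a - g a \<bullet> (b - a)\<bar> \<le> L / 2 * (norm (b - a))^2"
    by (rule descent[OF grad lip])
  then have "2 * \<bar>f b - f a - g a \<bullet> (b - a)\<bar> \<le> L * (norm (b - a))^2" by simp
  then show ?thesis using False pos by (simp add: ell_def divide_le_eq)
qed

theorem lemma2:
  fixes f :: "real^'n \<Rightarrow> real" and g :: "real^'n \<Rightarrow> real^'n" and L :: real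
    and A :: "(real^'n) set" and r :: "nat \<Rightarrow> real" and xm1 :: "real^'n"
    and x xb v d :: "nat \<Rightarrow> real^'n" and gmax :: "nat \<Rightarrow> ereal" and Lc :: "nat \<Rightarrow> real"
  assumes grad: "\<And>y. (f has_derivative (\<lambda>h. g y \<bullet> h)) (at y)"
    and lip: "\<And>y z. norm (g y - g z) \<le> L * norm (y - z)"
    and A: "compact A" "A \<noteq> {}"
    and r_pos: "\<And>t. r t > 0" and r_le: "\<And>t. r t \<le> 1"
    and run: "acfw_run f g A r xm1 x xb v d gmax Lc"
  shows "\<forall>t. Lc t \<le> L"
proof
  fix t
  have "Lc t \<le> L \<and> 0 \<le> Lc t"
  proof (induction t)
    case 0
    then show ?case using run ell_le[OF grad lip] by (simp add: acfw_run_def)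
  next
    case (Suc t)
    have eq: "Lc (Suc t) = max (ell f g (x t) (xb (Suc t))) (r t * Lc t)"
      using run by (simp add: acfw_run_def)
    have "r t * Lc t \<le> Lc t" using Suc r_le[of t] using mult_left_le_one_le[of "Lc t" "r t"] r_pos[of t] by (simp add: mult.commute)
    then show ?case using eq Suc ell_le[OF grad lip, of "x t" "xb (Suc t)"] by auto
  qed
  then show "Lc t \<le> L" by simp
qed

end
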